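(* In the setting below, let $g,\tilde g\in G$, $y=\varphi_{g^{-1}}(y_0)$, $\tilde y=\varphi_{\tilde g^{-1}}(y_0)$ and $e_g=\Phi_g(\tilde g^{-1})$. Then $V^y(y,\tilde y)=V^e(e_g)$, and the element $\zeta_e\in\mathfrak g$ defined by $\langle\langle\zeta_e,\xi\rangle\rangle=d_{e_g}V^e\big(T_I\Phi_{e_g}\xi\big)$ for all $\xi\in\mathfrak g$ satisfies, for all $\xi\in\mathfrak g$, $$\langle\langle\zeta_e,\xi\rangle\rangle=\frac{d}{ds}\Big|_{s=0}V^y\big(\varphi_{\tilde g^{-1}\exp(s\xi)}(y_0),\,y\big)\quad\text{(left observed system)},$$ $$\langle\langle\zeta_e,\xi\rangle\rangle=\frac{d}{ds}\Big|_{s=0}V^y\big(\varphi_{\exp(s\xi)\tilde g^{-1}}(y_0),\,y\big)\quad\text{(right observed system)}.$$ In particular $\zeta_e$ depends only on $\tilde g$ and the measurement $y$ (and not otherwise on $g$).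
   Context: $G$ is a Lie group with identity $I$, Lie algebra $\mathfrak g$, exponential map $\exp$, and $\langle\langle\cdot,\cdot\rangle\rangle$ is an inner product on $\mathfrak g$. $\mathcal Y$ is a smooth manifold, $y_0\in\mathcal Y$ fixed. Two cases: a left observed system, where $\Phi_g(h)=gh$ and $\varphi:G\times\mathcal Y\to\mathcal Y$ is a smooth left action ($\varphi_a\circ\varphi_b=\varphi_{ab}$); and a right observed system, where $\Phi_g(h)=hg$ and $\varphi$ is a smooth right action ($\varphi_a\circ\varphi_b=\varphi_{ba}$). The system is $\dot g=T_I\Phi_g\cdot\zeta(t)$, $y=\varphi_{g^{-1}}(y_0)$, with $\zeta(t)\in\mathfrak g$ known. $V^y:\mathcal Y\times\mathcal Y\to\mathbb R$ is smooth, symmetric and $\varphi$-invariant: $V^y(\varphi_h(a),\varphi_h(b))=V^y(a,b)$ for all $h\in G$, $a,b\in\mathcal Y$. Define $V^e:G\to\mathbb R$ by $V^e(e)=V^y(\varphi_e(y_0),y_0)$. Thus $e_g=g\tilde g^{-1}$ in the left case and $e_g=\tilde g^{-1}g$ in the right case. *)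

theory Defs
  imports "HOL-Analysis.Analysis"
begin

text \<open>Model: the Lie group G is a set of points in a Euclidean space 'E with
 multiplication gmul, inverse ginv and identity I; the Lie algebra is a linear
 subspace lie of 'E (the tangent space at I) with exponential expG.
 The flag left selects the left observed system (True) or the right one (False).\<close>

definition Phi :: "bool \<Rightarrow> ('E \<Rightarrow> 'E \<Rightarrow> 'E) \<Rightarrow> 'E \<Rightarrow> 'E \<Rightarrow> 'E" where
  "Phi left gmul g h = (if left then gmul g h else gmul h g)"

definition Ve :: "('y \<Rightarrow> 'y \<Rightarrow> real) \<Rightarrow> ('E \<Rightarrow> 'y \<Rightarrow> 'y) \<Rightarrow> 'y \<Rightarrow> 'E \<Rightarrow> real" where
  "Ve Vy phi y0 e = Vy (phi e y0) y0"

end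

theory Submission
  imports Defs
begin

theorem mainTheorem6:
  fixes left :: bool
    and G :: "'E::euclidean_space set"
    and gmul :: "'E \<Rightarrow> 'E \<Rightarrow> 'E" and ginv :: "'E \<Rightarrow> 'E" and I :: 'E
    and lie :: "'E set" and expG :: "'E \<Rightarrow> 'E"
    and ip :: "'E \<Rightarrow> 'E \<Rightarrow> real"
    and Y :: "'y set" and phi :: "'E \<Rightarrow> 'y \<Rightarrow> 'y" and y0 :: 'y
    and Vy :: "'y \<Rightarrow> 'y \<Rightarrow> real"
    and g gt :: 'E
    and DV :: "'E \<Rightarrow> real" and DPhi :: "'E \<Rightarrow> 'E" and zeta :: 'E
  assumes grp_I: "I \<in> G"
    and grp_mult: "\<And>a b. a \<in> G \<Longrightarrow> b \<in> G \<Longrightarrow> gmul a b \<in> G"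
    and grp_inv: "\<And>a. a \<in> G \<Longrightarrow> ginv a \<in> G"
    and grp_assoc: "\<And>a b c. a \<in> G \<Longrightarrow> b \<in> G \<Longrightarrow> c \<in> G \<Longrightarrow> gmul (gmul a b) c = gmul a (gmul b c)"
    and grp_idl: "\<And>a. a \<in> G \<Longrightarrow> gmul I a = a"
    and grp_idr: "\<And>a. a \<in> G \<Longrightarrow> gmul a I = a"
    and grp_invl: "\<And>a. a \<in> G \<Longrightarrow> gmul (ginv a) a = I"
    and grp_invr: "\<And>a. a \<in> G \<Longrightarrow> gmul a (ginv a) = I"
    and lie_subspace: "subspace lie"
    and exp_in: "\<And>\<xi> s. \<xi> \<in> lie \<Longrightarrow> expG (s *\<^sub>R \<xi>) \<in> G"
    and exp_zero: "expG 0 = I"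
    and exp_deriv: "\<And>\<xi>. \<xi> \<in> lie \<Longrightarrow> ((\<lambda>s. expG (s *\<^sub>R \<xi>)) has_vector_derivative \<xi>) (at 0)"
    and ip_sym: "\<And>a b. a \<in> lie \<Longrightarrow> b \<in> lie \<Longrightarrow> ip a b = ip b a"
    and ip_add: "\<And>a b c. a \<in> lie \<Longrightarrow> b \<in> lie \<Longrightarrow> c \<in> lie \<Longrightarrow> ip (a + b) c = ip a c + ip b c"
    and ip_scale: "\<And>r a b. a \<in> lie \<Longrightarrow> b \<in> lie \<Longrightarrow> ip (r *\<^sub>R a) b = r * ip a b"
    and ip_pos: "\<And>a. a \<in> lie \<Longrightarrow> a \<noteq> 0 \<Longrightarrow> ip a a > 0"
    and y0_in: "y0 \<in> Y"
    and act_in: "\<And>a y. a \<in> G \<Longrightarrow> y \<in> Y \<Longrightarrow> phi a y \<in> Y"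
    and act_id: "\<And>y. y \<in> Y \<Longrightarrow> phi I y = y"
    and act_comp: "\<And>a b y. a \<in> G \<Longrightarrow> b \<in> G \<Longrightarrow> y \<in> Y \<Longrightarrow>
        phi a (phi b y) = (if left then phi (gmul a b) y else phi (gmul b a) y)"
    and Vy_sym: "\<And>a b. a \<in> Y \<Longrightarrow> b \<in> Y \<Longrightarrow> Vy a b = Vy b a"
    and Vy_inv: "\<And>h a b. h \<in> G \<Longrightarrow> a \<in> Y \<Longrightarrow> b \<in> Y \<Longrightarrow> Vy (phi h a) (phi h b) = Vy a b"
    and g_in: "g \<in> G" and gt_in: "gt \<in> G"
    and DPhi: "(Phi left gmul (Phi left gmul g (ginv gt)) has_derivative DPhi) (at I within G)"
    and DV: "(Ve Vy phi y0 has_derivative DV) (at (Phi left gmul g (ginv gt)) within G)"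
    and zeta_in: "zeta \<in> lie"
    and zeta_def: "\<And>\<xi>. \<xi> \<in> lie \<Longrightarrow> ip zeta \<xi> = DV (DPhi \<xi>)"
  shows "Vy (phi (ginv g) y0) (phi (ginv gt) y0) = Ve Vy phi y0 (Phi left gmul g (ginv gt))
    \<and> (\<forall>\<xi>\<in>lie.
        ((\<lambda>s. Vy (phi (if left then gmul (ginv gt) (expG (s *\<^sub>R \<xi>))
                                else gmul (expG (s *\<^sub>R \<xi>)) (ginv gt)) y0)
                   (phi (ginv g) y0))
          has_real_derivative ip zeta \<xi>) (at 0))"
proof -
  define e where "e = Phi left gmul g (ginv gt)"
  have ginvg: "ginv g \<in> G" and ginvgt: "ginv gt \<in> G" using grp_inv g_in gt_in by auto
  have e_in: "e \<in> G" unfolding e_def Phi_def using grp_mult ginvg ginvgt g_in gt_in by auto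
  have py: "phi (ginv g) y0 \<in> Y" using act_in ginvg y0_in by auto
  have backg: "phi g (phi (ginv g) y0) = y0"
    using act_comp[OF g_in ginvg y0_in] grp_invr[OF g_in] grp_invl[OF g_in] act_id[OF y0_in] by auto
  have key: "Vy (phi (if left then gmul (ginv gt) a else gmul a (ginv gt)) y0) (phi (ginv g) y0)
      = Ve Vy phi y0 (Phi left gmul e a)" if a: "a \<in> G" for a
  proof -
    let ?b = "if left then gmul (ginv gt) a else gmul a (ginv gt)"
    have b_in: "?b \<in> G" using grp_mult a ginvgt by auto
    have pb: "phi ?b y0 \<in> Y" using act_in b_in y0_in by auto
    have "Vy (phi ?b y0) (phi (ginv g) y0) = Vy (phi g (phi ?b y0)) (phi g (phi (ginv g) y0))"
      using Vy_inv[OF g_in pb py] by simp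
    also have "\<dots> = Vy (phi g (phi ?b y0)) y0" using backg by simp
    also have "phi g (phi ?b y0) = phi (Phi left gmul e a) y0"
    proof (cases left)
      case True
      then show ?thesis using act_comp[OF g_in b_in y0_in] grp_assoc[OF g_in ginvgt a]
        unfolding e_def Phi_def by simp
    next
      case False
      then show ?thesis using act_comp[OF g_in b_in y0_in] grp_assoc[OF a ginvgt g_in]
        unfolding e_def Phi_def by simp
    qed
    finally show ?thesis unfolding Ve_def .
  qed
  have part1: "Vy (phi (ginv g) y0) (phi (ginv gt) y0) = Ve Vy phi y0 e"
  proof -
    have "Vy (phi (ginv g) y0) (phi (ginv gt) y0) = Vy (phi (ginv gt) y0) (phi (ginv g) y0)"
      using Vy_sym py act_in ginvgt y0_in by auto
    also have "\<dots> = Ve Vy phi y0 (Phi left gmul e I)"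
      using key[OF grp_I] grp_idl[OF ginvgt] grp_idr[OF ginvgt] by (cases left) simp_all
    also have "Phi left gmul e I = e" unfolding Phi_def using grp_idl[OF e_in] grp_idr[OF e_in] by simp
    finally show ?thesis .
  qed
  have part2: "((\<lambda>s. Vy (phi (if left then gmul (ginv gt) (expG (s *\<^sub>R \<xi>))
                                else gmul (expG (s *\<^sub>R \<xi>)) (ginv gt)) y0)
                   (phi (ginv g) y0))
          has_real_derivative ip zeta \<xi>) (at 0)" if xi: "\<xi> \<in> lie" for \<xi>
  proof -
    let ?E = "\<lambda>s::real. expG (s *\<^sub>R \<xi>)"
    have D1: "(?E has_derivative (\<lambda>s. s *\<^sub>R \<xi>)) (at 0)"
      using exp_deriv[OF xi] unfolding has_vector_derivative_def .
    have img: "?E ` UNIV \<subseteq> G" using exp_in[OF xi] by auto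
    have E0: "?E 0 = I" using exp_zero by simp
    have D2: "(Phi left gmul e has_derivative DPhi) (at (?E 0) within ?E ` UNIV)"
      using has_derivative_subset[OF DPhi img] E0 unfolding e_def by simp
    have D12: "((Phi left gmul e \<circ> ?E) has_derivative (DPhi \<circ> (\<lambda>s. s *\<^sub>R \<xi>))) (at 0)"
      using diff_chain_within[OF D1 D2] by simp
    have pe: "Phi left gmul e I = e" unfolding Phi_def using grp_idl[OF e_in] grp_idr[OF e_in] by simp
    have img2: "(Phi left gmul e \<circ> ?E) ` UNIV \<subseteq> G"
      using exp_in[OF xi] grp_mult e_in unfolding Phi_def by auto
    have D3: "(Ve Vy phi y0 has_derivative DV) (at ((Phi left gmul e \<circ> ?E) 0) within (Phi left gmul e \<circ> ?E) ` UNIV)"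
      using has_derivative_subset[OF DV img2] E0 pe unfolding e_def by simp
    have D: "((Ve Vy phi y0 \<circ> (Phi left gmul e \<circ> ?E)) has_derivative (DV \<circ> (DPhi \<circ> (\<lambda>s. s *\<^sub>R \<xi>)))) (at 0)"
      using diff_chain_within[OF D12 D3] by (simp add: comp_def)
    have lin: "linear DV" "linear DPhi"
      using has_derivative_linear DV DPhi by blast+
    have fun_eq: "(DV \<circ> (DPhi \<circ> (\<lambda>s. s *\<^sub>R \<xi>))) = (\<lambda>s. ip zeta \<xi> * s)"
      using lin zeta_def[OF xi] by (auto simp: linear_scale)
    have feq: "(Ve Vy phi y0 \<circ> (Phi left gmul e \<circ> ?E)) = (\<lambda>s. Vy (phi (if left then gmul (ginv gt) (expG (s *\<^sub>R \<xi>))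
                                else gmul (expG (s *\<^sub>R \<xi>)) (ginv gt)) y0)
                   (phi (ginv g) y0))"
      using key exp_in[OF xi] by auto
    show ?thesis using D unfolding fun_eq feq has_field_derivative_def by simp
  qed
  show ?thesis using part1 part2 unfolding e_def by blast
qed

end
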